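(* Let $c=1/3$ for quadrangulations and $c=1/2$ for triangulations, and let $v>1$. Under the limiting joint law of $(L(d),L(vd))$ as $d\to\infty$ under $P_\infty$, the conditional expectation of the second coordinate given that the first equals $L_1$ is $$L_{\rm av}(v\,|\,L_1)=\frac{3c(v-1)^2+3\sqrt{\pi cL_1}\,(v-1)+2L_1}{2v^2}.$$ Here the limiting joint law is the one with density $$\mathcal P(L_1,L_2;v)=\frac{2}{\sqrt\pi}\frac{\sqrt{L_1}}{c^{3/2}}e^{-L_1/c}\cdot\frac{\sqrt2}{c}\frac{v^2e^{-\frac{L_2v^2}{c(v-1)^2}}}{(v-1)^2}\sum_{n\ge0}\frac{(-1)^n\left(\frac{L_1}{c(v-1)^2}\right)^{n/2}\pi_n\!\left(\sqrt{\frac{2L_2v^2}{c(v-1)^2}}\right)}{(n+1)!\,\Gamma\!\left(\frac{n+1}{2}\right)},$$ where $\pi_n(t)=-e^{t^2/2}\frac{d^{n+1}}{dt^{n+1}}(t^ne^{-t^2/2})$.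
   Context: A planar quadrangulation (resp. triangulation) is a planar map all of whose faces have degree 4 (resp. 3). A $k$-pointed-rooted map carries: - a marked vertex $v_0$; - a marked edge $e_1$ oriented from a vertex $v_1$ at graph distance $k$ from $v_0$ to a vertex at distance $k-1$. Cutting along the leftmost shortest path from $v_1$ to $v_0$ (first step $e_1$, then always the leftmost edge decreasing the distance to $v_0$) gives a $k$-slice. Its left boundary consists of the $k$ edges from $v_1$ to $v_0$, and its right boundary of the $k-1$ edges from the endpoint of $e_1$ to $v_0$. Hull perimeter, quadrangulations ($2\le d\le k-1$). Start at the right-boundary vertex $v^{(0)}$ at distance $d-1$. Repeatedly, from $v^{(i)}$, follow the leftmost 2-step path $v^{(i)}\to w\to v^{(i+1)}$, with respect to the first edge of the leftmost shortest path from $v^{(i)}$ to $v_0$, where $d(v_0,w)=d$, $d(v_0,v^{(i+1)})=d-1$ and $v^{(i+1)}\ne v^{(i)}$. This stops after $p$ steps at the left-boundary vertex at distance $d-1$, and $\mathcal L(d)=2p$. Hull perimeter, triangulations ($1\le d\le k-1$). Start at the right-boundary vertex at distance $d$. Repeatedly follow the leftmost edge, in the same sense, to a distinct vertex at distance $d$, until reaching the left-boundary vertex at distance $d$ after $p$ steps; then $\mathcal L(d)=p$. Local limit. $P_k$ is the $N\to\infty$ limit of the uniform measure on $k$-pointed-rooted maps of the given type with $N$ faces, and $P_\infty=\lim_{k\to\infty}P_k$. Finally $L(d)=\mathcal L(d)/d^2$. *)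

theory Defs
  imports "HOL-Analysis.Analysis"
begin

definition pin :: "nat \<Rightarrow> real \<Rightarrow> real" where
  "pin n t = - exp (t\<^sup>2 / 2) * ((deriv ^^ (Suc n)) (\<lambda>s. s ^ n * exp (- s\<^sup>2 / 2)) t)"

definition jointDensity :: "real \<Rightarrow> real \<Rightarrow> real \<Rightarrow> real \<Rightarrow> real" where
  "jointDensity c v L1 L2 =
     (2 / sqrt pi) * sqrt L1 / c powr (3/2) * exp (- L1 / c)
     * (sqrt 2 / c) * (v\<^sup>2 * exp (- (L2 * v\<^sup>2) / (c * (v - 1)\<^sup>2)) / (v - 1)\<^sup>2)
     * (\<Sum>n. (-1) ^ n * (L1 / (c * (v - 1)\<^sup>2)) powr (real n / 2)
              * pin n (sqrt (2 * L2 * v\<^sup>2 / (c * (v - 1)\<^sup>2)))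
              / (fact (Suc n) * Gamma ((real n + 1) / 2)))"

definition Lav :: "real \<Rightarrow> real \<Rightarrow> real \<Rightarrow> real" where
  "Lav c v L1 = (3 * c * (v - 1)\<^sup>2 + 3 * sqrt (pi * c * L1) * (v - 1) + 2 * L1) / (2 * v\<^sup>2)"

end

theory Submission
  imports Defs "HOL-Computational_Algebra.Polynomial"
begin


fun Pp :: "nat \<Rightarrow> nat \<Rightarrow> real poly" where
  "Pp n 0 = monom 1 n"
| "Pp n (Suc k) = pderiv (Pp n k) - pCons 0 (Pp n k)"

fun Bp :: "nat \<Rightarrow> nat \<Rightarrow> real poly" where
  "Bp n 0 = monom 1 n"
| "Bp n (Suc k) = pderiv (Bp n k) + pCons 0 (Bp n k)"

definition G :: "nat \<Rightarrow> nat \<Rightarrow> real \<Rightarrow> real" where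
  "G n k t = poly (Pp n k) t * exp (- t\<^sup>2 / 2)"

definition H :: "nat \<Rightarrow> nat \<Rightarrow> real \<Rightarrow> real" where
  "H n k t = poly (Bp n k) t * exp (t\<^sup>2 / 2)"

lemma G_deriv: "(G n k has_real_derivative G n (Suc k) t) (at t)"
proof -
  have "((\<lambda>t. poly (Pp n k) t * exp (- t\<^sup>2 / 2)) has_real_derivative
     poly (pderiv (Pp n k)) t * exp (- t\<^sup>2 / 2) + poly (Pp n k) t * (exp (- t\<^sup>2 / 2) * (- (2 * t) / 2))) (at t)"
    by (auto intro!: derivative_eq_intros poly_DERIV)
  then show ?thesis unfolding G_def by (simp add: algebra_simps)
qed

lemma H_deriv: "(H n k has_real_derivative H n (Suc k) t) (at t)"
proof -
  have "((\<lambda>t. poly (Bp n k) t * exp (t\<^sup>2 / 2)) has_real_derivative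
     poly (pderiv (Bp n k)) t * exp (t\<^sup>2 / 2) + poly (Bp n k) t * (exp (t\<^sup>2 / 2) * ((2 * t) / 2))) (at t)"
    by (auto intro!: derivative_eq_intros poly_DERIV)
  then show ?thesis unfolding H_def by (simp add: algebra_simps)
qed

lemma iter_deriv: "(deriv ^^ k) (\<lambda>s. s ^ n * exp (- s\<^sup>2 / 2)) = G n k"
proof (induction k)
  case 0
  show ?case by (auto simp: G_def poly_monom)
next
  case (Suc k)
  show ?case
    by (simp only: funpow.simps o_apply Suc.IH) (intro ext DERIV_imp_deriv G_deriv)
qed

lemma pin_eq: "pin n t = - poly (Pp n (Suc n)) t"
  unfolding pin_def iter_deriv G_def by (simp add: exp_minus field_simps)

lemma coeff_bound: "\<bar>coeff (Pp n k) i\<bar> \<le> coeff (Bp n k) i"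
proof (induction k arbitrary: i)
  case 0
  then show ?case by (simp add: coeff_monom)
next
  case (Suc k)
  have a: "\<bar>of_nat (Suc i) * coeff (Pp n k) (Suc i)\<bar> \<le> of_nat (Suc i) * coeff (Bp n k) (Suc i)"
    using Suc.IH[of "Suc i"] by (simp add: abs_mult mult_left_mono)
  show ?case
  proof (cases i)
    case 0
    then show ?thesis using a by (simp add: coeff_pderiv)
  next
    case (Suc j)
    have "\<bar>coeff (Pp n k) j\<bar> \<le> coeff (Bp n k) j" by (rule Suc.IH)
    then show ?thesis using a Suc by (simp add: coeff_pderiv del: of_nat_Suc)
  qed
qed

lemma Bp_nonneg: "coeff (Bp n k) i \<ge> 0"
proof (induction k arbitrary: i)
  case 0
  then show ?case by (simp add: coeff_monom)
next
  case (Suc k)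
  then show ?case by (cases i) (auto simp: coeff_pderiv)
qed

lemma Pp_coeff_zero: "i + k < n \<Longrightarrow> coeff (Pp n k) i = 0"
proof (induction k arbitrary: i)
  case 0
  then show ?case by (simp add: coeff_monom)
next
  case (Suc k)
  then show ?case by (cases i) (auto simp: coeff_pderiv)
qed

lemma poly_sum_le: fixes p :: "real poly" assumes "degree p \<le> N" shows "poly p x = (\<Sum>i\<le>N. coeff p i * x ^ i)"
proof -
  have "poly p x = (\<Sum>i\<le>degree p. coeff p i * x ^ i)" by (rule poly_altdef)
  also have "\<dots> = (\<Sum>i\<le>N. coeff p i * x ^ i)"
    by (rule sum.mono_neutral_left) (use assms in \<open>auto simp: coeff_eq_0\<close>)
  finally show ?thesis .
qed

lemma degree_Pp_le: "degree (Pp n k) \<le> degree (Bp n k)"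
proof (rule degree_le, intro allI impI)
  fix i assume "degree (Bp n k) < i"
  then have "coeff (Bp n k) i = 0" by (simp add: coeff_eq_0)
  then show "coeff (Pp n k) i = 0" using coeff_bound[of n k i] by simp
qed

lemma poly_bound: "\<bar>poly (Pp n k) x\<bar> \<le> poly (Bp n k) \<bar>x\<bar>"
proof -
  have "\<bar>poly (Pp n k) x\<bar> = \<bar>\<Sum>i\<le>degree (Bp n k). coeff (Pp n k) i * x ^ i\<bar>"
    using poly_sum_le[OF degree_Pp_le] by simp
  also have "\<dots> \<le> (\<Sum>i\<le>degree (Bp n k). \<bar>coeff (Pp n k) i * x ^ i\<bar>)" by (rule sum_abs)
  also have "\<dots> \<le> (\<Sum>i\<le>degree (Bp n k). coeff (Bp n k) i * \<bar>x\<bar> ^ i)"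
    by (intro sum_mono) (simp add: abs_mult power_abs mult_right_mono coeff_bound)
  also have "\<dots> = poly (Bp n k) \<bar>x\<bar>" by (simp add: poly_altdef)
  finally show ?thesis .
qed

lemma poly_Bp_nonneg: "x \<ge> 0 \<Longrightarrow> poly (Bp n k) x \<ge> 0"
  unfolding poly_altdef by (intro sum_nonneg mult_nonneg_nonneg Bp_nonneg) auto

lemma H_nonneg: "x \<ge> 0 \<Longrightarrow> H n k x \<ge> 0"
  unfolding H_def using poly_Bp_nonneg by simp

lemma taylor_bound:
  assumes x: "x \<ge> 0" and r: "r > 0"
  shows "poly (Bp n k) x * exp (x\<^sup>2 / 2) * r ^ k / fact k \<le> (x + r) ^ n * exp ((x + r)\<^sup>2 / 2)"
proof -
  obtain t where t: "x < t" "t < x + r" and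
    eq: "H n 0 (x + r) = (\<Sum>m<Suc k. (H n m x / fact m) * (x + r - x)^m) + (H n (Suc k) t / fact (Suc k)) * (x + r - x)^(Suc k)"
    using Taylor_up[of "Suc k" "H n" "H n 0" x "x + r" x] H_deriv r by auto
  have "H n k x / fact k * r ^ k \<le> (\<Sum>m<Suc k. (H n m x / fact m) * r^m)"
    using x r by (simp add: H_nonneg sum_nonneg)
  also have "\<dots> \<le> H n 0 (x + r)"
    using eq t x r by (simp add: H_nonneg)
  finally show ?thesis by (simp add: H_def poly_monom)
qed

lemma pow_fact_le_exp:
  fixes z :: real assumes "z \<ge> 0" shows "z ^ m / fact m \<le> exp z"
proof -
  have s: "(\<lambda>n. z ^ n / fact n) sums exp z"
    using exp_converges[of z] by (simp add: divide_inverse scaleR_conv_of_real mult.commute)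
  have "(\<Sum>n\<in>{m}. z ^ n / fact n) \<le> (\<Sum>n. z ^ n / fact n)"
    by (rule sum_le_suminf) (use s assms in \<open>auto simp: sums_summable\<close>)
  then show ?thesis using s by (simp add: sums_unique[symmetric])
qed

lemma Gamma_half_bound: "fact m * sqrt pi \<le> 2 ^ m * Gamma (real m + 1/2)"
proof (induction m)
  case 0
  then show ?case by (simp add: Gamma_one_half_real)
next
  case (Suc m)
  have g: "Gamma (real m + 1/2 + 1) = (real m + 1/2) * Gamma (real m + 1/2)"
    by (rule Gamma_plus1) (auto simp: nonpos_Ints_def)
  have pos: "Gamma (real m + 1/2) > 0" by simp
  have "fact (Suc m) * sqrt pi = (real m + 1) * (fact m * sqrt pi)" by simp
  also have "\<dots> \<le> (real m + 1) * (2 ^ m * Gamma (real m + 1/2))"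
    by (intro mult_left_mono Suc.IH) auto
  also have "\<dots> \<le> 2 ^ Suc m * ((real m + 1/2) * Gamma (real m + 1/2))"
    using pos by (simp add: algebra_simps mult_right_mono)
  also have "\<dots> = 2 ^ Suc m * Gamma (real (Suc m) + 1/2)"
    using g by (simp add: add_ac)
  finally show ?case .
qed

lemma half_pow_le: "(1/2::real) ^ (n div 2) \<le> 2 * (3/4) ^ n"
proof -
  have a: "(1/2::real) ^ m \<le> (9/16) ^ m" for m by (intro power_mono) auto
  show ?thesis
  proof (cases "even n")
    case True
    then obtain m where n: "n = 2 * m" by auto
    have "(3/4::real) ^ n = ((3/4)^2) ^ m" by (simp only: n power_mult)
    then have "(3/4::real) ^ n = (9/16) ^ m" by (simp add: power2_eq_square)
    have z: "(0::real) \<le> (9/16) ^ m" by simp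
    have d: "n div 2 = m" using n by simp
    show ?thesis unfolding d \<open>(3/4::real) ^ n = (9/16) ^ m\<close> using a[of m] z by linarith
  next
    case False
    then obtain m where n: "n = 2 * m + 1" using oddE by blast
    have "(3/4::real) ^ n = ((3/4)^2) ^ m * (3/4)" by (simp only: n power_mult power_add power_one_right)
    then have "(3/4::real) ^ n = (9/16) ^ m * (3/4)" by (simp add: power2_eq_square)
    then have e2: "(3/4::real) ^ n = (9/16) ^ m * (3/4)" .
    have z: "(0::real) \<le> (9/16) ^ m" by simp
    have d: "n div 2 = m" using n by simp
    show ?thesis unfolding d e2 using a[of m] z by linarith
  qed
qed

lemma gamma_series_bound:
  assumes y: "y \<ge> 0"
  shows "y ^ n / Gamma ((real n + 1) / 2) \<le> (1 + y) * exp (8 * y\<^sup>2) * (2 * (3/4) ^ n)"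
proof -
  have key: "y ^ (2*m) / fact m \<le> exp (8 * y\<^sup>2) * (1/4) ^ m" for m
  proof -
    have e: "y ^ (2*m) = (y\<^sup>2) ^ m" by (simp only: power_mult)
    have "y ^ (2*m) / fact m = ((8 * y\<^sup>2) ^ m / fact m) * (1/8) ^ m"
      unfolding e by (simp add: power_mult_distrib field_simps)
    also have "\<dots> \<le> exp (8 * y\<^sup>2) * (1/8) ^ m"
      by (intro mult_right_mono pow_fact_le_exp) auto
    also have "\<dots> \<le> exp (8 * y\<^sup>2) * (1/4) ^ m"
      by (intro mult_left_mono power_mono) auto
    finally show ?thesis .
  qed
  have hp: "(1/2::real) ^ (n div 2) \<le> 2 * (3/4) ^ n" by (rule half_pow_le)
  have "y ^ n / Gamma ((real n + 1) / 2) \<le> (1 + y) * exp (8 * y\<^sup>2) * (1/2) ^ (n div 2)"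
  proof (cases "even n")
    case True
    then obtain m where n: "n = 2 * m" by auto
    have ga: "(real n + 1) / 2 = real m + 1/2" using n by simp
    have gp: "Gamma (real m + 1/2) > 0" by simp
    have "y ^ n / Gamma ((real n + 1) / 2) \<le> y ^ (2*m) / (fact m * sqrt pi / 2 ^ m)"
      unfolding ga n using Gamma_half_bound[of m] gp
      by (intro divide_left_mono) (use y in \<open>auto simp: field_simps\<close>)
    also have "\<dots> \<le> y ^ (2*m) / (fact m / 2 ^ m)"
      using pi_gt3 by (intro divide_left_mono) (use y in \<open>auto simp: field_simps real_le_rsqrt\<close>)
    also have "\<dots> = (y ^ (2*m) / fact m) * 2 ^ m" by simp
    also have "\<dots> \<le> exp (8 * y\<^sup>2) * (1/4) ^ m * 2 ^ m"
      by (intro mult_right_mono key) auto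
    also have "\<dots> = exp (8 * y\<^sup>2) * (1/2) ^ m"
      by (simp add: power_one_over field_simps flip: power_mult_distrib)
    also have "\<dots> \<le> (1 + y) * exp (8 * y\<^sup>2) * (1/2) ^ (n div 2)"
      using y n by (simp add: mult_right_mono)
    finally show ?thesis .
  next
    case False
    then obtain m where n: "n = 2 * m + 1" using oddE by blast
    have ga: "(real n + 1) / 2 = 1 + real m" using n by simp
    have gf: "Gamma ((real n + 1) / 2) = fact m" unfolding ga using Gamma_fact[of m] by simp
    have "y ^ n / Gamma ((real n + 1) / 2) = y * (y ^ (2*m) / fact m)"
      unfolding gf using n by simp
    also have "\<dots> \<le> y * (exp (8 * y\<^sup>2) * (1/4) ^ m)"
      by (intro mult_left_mono key y)
    also have "\<dots> \<le> y * (exp (8 * y\<^sup>2) * (1/2) ^ m)"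
      by (intro mult_left_mono power_mono y) auto
    also have "\<dots> \<le> (1 + y) * exp (8 * y\<^sup>2) * (1/2) ^ (n div 2)"
      using n y by (simp add: mult_right_mono)
    finally show ?thesis .
  qed
  also have "\<dots> \<le> (1 + y) * exp (8 * y\<^sup>2) * (2 * (3/4) ^ n)"
    by (intro mult_left_mono hp) (use y in auto)
  finally show ?thesis .
qed



lemma gamma_scaled:
  fixes b x :: real
  assumes b: "b > 0" and x: "x > 0"
  shows "((\<lambda>L. L powr (x - 1) * exp (- (b * L))) has_integral Gamma x / b powr x) {0..}"
proof -
  define f where "f u = u powr (x - 1) / exp u" for u :: real
  have fi: "(f has_integral Gamma x) {0..}" unfolding f_def by (rule Gamma_integral_real[OF x])
  have fa: "f absolutely_integrable_on {0..}"
    by (rule nonnegative_absolutely_integrable_1) (use fi in \<open>auto simp: f_def integrable_on_def\<close>)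
  have img: "(\<lambda>L. b * L) ` {0..} = {0..}"
  proof (intro set_eqI iffI)
    fix u assume "u \<in> {0::real..}"
    then have "u = b * (u / b)" "u / b \<in> {0..}" using b by auto
    then show "u \<in> (\<lambda>L. b * L) ` {0..}" by blast
  qed (use b in auto)
  have cv: "(\<lambda>L. \<bar>b\<bar> * f (b * L)) absolutely_integrable_on {0..} \<and> integral {0..} (\<lambda>L. \<bar>b\<bar> * f (b * L)) = Gamma x
     \<longleftrightarrow> f absolutely_integrable_on ((\<lambda>L. b * L) ` {0..}) \<and> integral ((\<lambda>L. b * L) ` {0..}) f = Gamma x"
    by (rule has_absolute_integral_change_of_variables_1') (use b in \<open>auto intro!: derivative_eq_intros simp: inj_on_def\<close>)
  have "f absolutely_integrable_on ((\<lambda>L. b * L) ` {0..}) \<and> integral ((\<lambda>L. b * L) ` {0..}) f = Gamma x"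
    unfolding img using fa integral_unique[OF fi] by simp
  then have "(\<lambda>L. \<bar>b\<bar> * f (b * L)) absolutely_integrable_on {0..} \<and> integral {0..} (\<lambda>L. \<bar>b\<bar> * f (b * L)) = Gamma x"
    using cv by blast
  then have h: "((\<lambda>L. \<bar>b\<bar> * f (b * L)) has_integral Gamma x) {0..}"
    by (metis absolutely_integrable_on_def integrable_integral)
  have h2: "((\<lambda>L. (1 / b powr x) * (\<bar>b\<bar> * f (b * L))) has_integral (1 / b powr x) * Gamma x) {0..}"
    by (rule has_integral_mult_right[OF h])
  have eq: "(1 / b powr x) * (\<bar>b\<bar> * f (b * L)) = L powr (x - 1) * exp (- (b * L))"
    if L: "L \<in> {0..}" for L
  proof -
    have "(b * L) powr (x - 1) = b powr (x - 1) * L powr (x - 1)"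
      using L b by (simp add: powr_mult)
    moreover have "b powr x = b * b powr (x - 1)" using b by (simp add: powr_diff)
    moreover have "b powr (x - 1) > 0" using b by simp
    ultimately show ?thesis
      using b by (simp add: f_def exp_minus field_simps)
  qed
  have "((\<lambda>L. L powr (x - 1) * exp (- (b * L))) has_integral (1 / b powr x) * Gamma x) {0..}"
    by (rule has_integral_eq[OF eq h2])
  then show ?thesis by simp
qed

lemma improper_lim:
  fixes f h :: "real \<Rightarrow> real"
  assumes h: "h integrable_on {0..}"
    and le: "\<And>x. x \<ge> 0 \<Longrightarrow> \<bar>f x\<bar> \<le> h x"
    and F: "\<And>R. R \<ge> 0 \<Longrightarrow> (f has_integral F R) {0..R}"
    and lim: "(\<lambda>n. F (real n)) \<longlonglongrightarrow> l"
  shows "(f has_integral l) {0..}"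
proof (rule has_integral_dominated_convergence[where f = "\<lambda>k x. if x \<in> {0..real k} then f x else 0" and y = "\<lambda>k. F (real k)", OF _ h _ _ lim])
  fix k :: nat
  have e: "{0..real k} \<inter> {0..} = {0..real k}" by auto
  show "((\<lambda>x. if x \<in> {0..real k} then f x else 0) has_integral F (real k)) {0..}"
    unfolding has_integral_restrict_Int e using F[of "real k"] by simp
next
  fix k :: nat
  show "\<forall>x\<in>{0..}. norm (if x \<in> {0..real k} then f x else 0) \<le> h x"
    using le by (auto intro: order_trans[OF _ le])
next
  show "\<forall>x\<in>{0..}. (\<lambda>k. if x \<in> {0..real k} then f x else 0) \<longlonglongrightarrow> f x"
  proof
    fix x :: real assume x: "x \<in> {0..}"
    obtain N :: nat where N: "x \<le> real N" using real_arch_simple by blast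
    have "eventually (\<lambda>k. (if x \<in> {0..real k} then f x else 0) = f x) sequentially"
      using eventually_ge_at_top[of N] by eventually_elim (use x N in auto)
    then show "(\<lambda>k. if x \<in> {0..real k} then f x else 0) \<longlonglongrightarrow> f x"
      by (rule tendsto_eventually)
  qed
qed

lemma pow_exp_decay: "((\<lambda>t::real. t ^ i * exp (- (t\<^sup>2 / 2))) \<longlongrightarrow> 0) at_top"
proof (rule tendsto_sandwich[of "\<lambda>_. 0" _ _ "\<lambda>t. t ^ i / exp t"])
  show "\<forall>\<^sub>F t::real in at_top. 0 \<le> t ^ i * exp (- (t\<^sup>2 / 2))"
    using eventually_ge_at_top[of "0::real"] by eventually_elim auto
  show "\<forall>\<^sub>F t::real in at_top. t ^ i * exp (- (t\<^sup>2 / 2)) \<le> t ^ i / exp t"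
    using eventually_ge_at_top[of "2::real"]
  proof eventually_elim
    fix t :: real assume t: "2 \<le> t"
    have "t * 2 \<le> t * t" using t by (intro mult_left_mono) auto
    then have "t \<le> t\<^sup>2 / 2" by (simp add: power2_eq_square)
    then have e1: "exp (- (t\<^sup>2 / 2)) \<le> exp (- t)" by simp
    have e2: "t ^ i / exp t = t ^ i * exp (- t)" by (simp add: exp_minus divide_inverse)
    have "t ^ i * exp (- (t\<^sup>2 / 2)) \<le> t ^ i * exp (- t)"
      by (rule mult_left_mono[OF e1]) (use t in simp)
    then show "t ^ i * exp (- (t\<^sup>2 / 2)) \<le> t ^ i / exp t" by (simp only: e2)
  qed
qed (auto intro: tendsto_power_div_exp_0)

lemma poly_exp_decay: "((\<lambda>t::real. poly p t * exp (- (t\<^sup>2 / 2))) \<longlongrightarrow> 0) at_top"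
proof -
  have "(\<lambda>t. poly p t * exp (- (t\<^sup>2 / 2))) = (\<lambda>t. \<Sum>i\<le>degree p. coeff p i * (t ^ i * exp (- (t\<^sup>2 / 2))))"
    by (simp add: poly_altdef sum_distrib_right mult.assoc)
  moreover have "((\<lambda>t. \<Sum>i\<le>degree p. coeff p i * (t ^ i * exp (- (t\<^sup>2 / 2)))) \<longlongrightarrow> 0) at_top"
    by (rule tendsto_null_sum, rule tendsto_mult_right_zero, rule pow_exp_decay)
  ultimately show ?thesis by simp
qed

lemma G_pow_decay: "((\<lambda>t. t ^ j * G n k t) \<longlongrightarrow> 0) at_top"
proof -
  have "(\<lambda>t. t ^ j * G n k t) = (\<lambda>t. poly (monom 1 j * Pp n k) t * exp (- (t\<^sup>2 / 2)))"
    by (simp add: G_def poly_monom mult.assoc)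
  then show ?thesis using poly_exp_decay[of "monom 1 j * Pp n k"] by (simp only:)
qed

lemma sqrt_seq_top: "b > 0 \<Longrightarrow> filterlim (\<lambda>k::nat. sqrt (2 * b * real k)) at_top sequentially"
proof -
  assume b: "b > 0"
  have "filterlim (\<lambda>k::nat. (2 * b) * real k) at_top sequentially"
    by (rule filterlim_tendsto_pos_mult_at_top[OF tendsto_const]) (use b in \<open>auto intro: filterlim_real_sequentially\<close>)
  then show ?thesis using filterlim_compose[OF sqrt_at_top] by auto
qed



lemma G_chain [derivative_intros]:
  "(g has_real_derivative g') (at x within s) \<Longrightarrow> ((\<lambda>x. G n k (g x)) has_real_derivative G n (Suc k) (g x) * g') (at x within s)"
  by (rule DERIV_chain2[OF G_deriv])

lemma sqrt_chain:
  assumes b: "b > 0" and L: "L > 0" and d: "(\<Phi> has_real_derivative \<phi>) (at (sqrt (2*b*L)))"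
  shows "((\<lambda>L. \<Phi> (sqrt (2*b*L))) has_real_derivative \<phi> * b / sqrt (2*b*L)) (at L)"
proof -
  have p: "2*b*L > 0" using b L by simp
  have "((\<lambda>L. sqrt (2*b*L)) has_real_derivative (inverse (sqrt (2*b*L)) / 2) * (2*b)) (at L)"
    by (rule DERIV_chain2[where f=sqrt and g="\<lambda>L. 2*b*L", OF DERIV_real_sqrt[OF p]]) (auto intro!: derivative_eq_intros)
  from DERIV_chain2[OF d this] show ?thesis by (simp add: field_simps)
qed

lemma improper_zero:
  fixes f h \<Phi> \<phi> :: "real \<Rightarrow> real"
  assumes b: "b > 0"
    and h: "h integrable_on {0..}" and le: "\<And>L. L \<ge> 0 \<Longrightarrow> \<bar>f L\<bar> \<le> h L"
    and d: "\<And>t. (\<Phi> has_real_derivative \<phi> t) (at t)"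
    and fe: "\<And>L. L > 0 \<Longrightarrow> \<phi> (sqrt (2*b*L)) * b / sqrt (2*b*L) = f L"
    and z: "\<Phi> 0 = 0" and lim: "(\<Phi> \<longlongrightarrow> 0) at_top"
  shows "(f has_integral 0) {0..}"
proof (rule improper_lim[OF h le, where F = "\<lambda>R. \<Phi> (sqrt (2*b*R)) - \<Phi> (sqrt (2*b*0))"])
  have cP: "continuous_on UNIV \<Phi>"
    using d by (metis DERIV_isCont continuous_at_imp_continuous_on)
  fix R :: real assume R: "R \<ge> 0"
  show "(f has_integral \<Phi> (sqrt (2*b*R)) - \<Phi> (sqrt (2*b*0))) {0..R}"
  proof (rule fundamental_theorem_of_calculus_interior[OF R])
    show "continuous_on {0..R} (\<lambda>L. \<Phi> (sqrt (2*b*L)))"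
      by (rule continuous_on_compose2[OF cP]) (auto intro!: continuous_intros)
    fix x assume x: "x \<in> {0<..<R}"
    then have "((\<lambda>L. \<Phi> (sqrt (2*b*L))) has_real_derivative f x) (at x)"
      using sqrt_chain[OF b _ d[of "sqrt (2*b*x)"]] fe[of x] by auto
    then show "((\<lambda>L. \<Phi> (sqrt (2*b*L))) has_vector_derivative f x) (at x)"
      by (simp add: has_real_derivative_iff_has_vector_derivative)
  qed
next
  have "(\<lambda>k::nat. \<Phi> (sqrt (2*b*real k))) \<longlonglongrightarrow> 0"
    using filterlim_compose[OF lim sqrt_seq_top[OF b]] by simp
  then show "(\<lambda>k::nat. \<Phi> (sqrt (2*b*real k)) - \<Phi> (sqrt (2*b*0))) \<longlonglongrightarrow> 0"
    using z by simp
qed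

definition core :: "nat \<Rightarrow> real \<Rightarrow> real \<Rightarrow> real" where
  "core n b L = exp (- (b * L)) * pin n (sqrt (2 * b * L))"

lemma core_eq: assumes "b > 0" "L \<ge> 0" shows "core n b L = - G n (Suc n) (sqrt (2 * b * L))"
proof -
  have "(sqrt (2 * b * L))\<^sup>2 = 2 * b * L" using assms by simp
  then show ?thesis unfolding core_def pin_eq G_def by (simp add: algebra_simps)
qed

lemma G0: "k < n \<Longrightarrow> G n k 0 = 0"
  by (simp add: G_def poly_0_coeff_0 Pp_coeff_zero)

lemma core_zero:
  assumes b: "b > 0" and h: "h integrable_on {0..}"
    and le: "\<And>L. L \<ge> 0 \<Longrightarrow> \<bar>core (Suc m) b L\<bar> \<le> h L"
  shows "(core (Suc m) b has_integral 0) {0..}"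
proof (rule improper_zero[OF b h le])
  let ?n = "Suc m"
  show "((\<lambda>t. - (1/b) * (t * G ?n ?n t - G ?n m t)) has_real_derivative
        - (1/b) * (t * G ?n (Suc ?n) t)) (at t)" for t
    using b by (auto intro!: derivative_eq_intros simp: field_simps)
  show "- (1/b) * (sqrt (2*b*L) * G ?n (Suc ?n) (sqrt (2*b*L))) * b / sqrt (2*b*L) = core ?n b L"
    if "L > 0" for L
    using that b by (simp add: core_eq field_simps)
  show "- (1/b) * (0 * G ?n ?n 0 - G ?n m 0) = 0" by (simp add: G0)
  show "((\<lambda>t. - (1/b) * (t * G ?n ?n t - G ?n m t)) \<longlongrightarrow> 0) at_top"
    using tendsto_mult[OF tendsto_const[of "- (1/b)"] tendsto_diff[OF G_pow_decay[of 1 ?n ?n] G_pow_decay[of 0 ?n m]]]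
    by simp
qed

lemma core_zero1:
  assumes b: "b > 0" and h: "h integrable_on {0..}"
    and le: "\<And>L. L \<ge> 0 \<Longrightarrow> \<bar>L * core (m+3) b L\<bar> \<le> h L"
  shows "((\<lambda>L. L * core (m+3) b L) has_integral 0) {0..}"
proof (rule improper_zero[OF b h le])
  let ?n = "m+3"
  let ?P = "\<lambda>t. - (1/(2*b\<^sup>2)) * (t^3 * G ?n ?n t - 3 * t^2 * G ?n (m+2) t + 6 * t * G ?n (m+1) t - 6 * G ?n m t)"
  show "(?P has_real_derivative - (1/(2*b\<^sup>2)) * (t^3 * G ?n (Suc ?n) t)) (at t)" for t
    using b by (auto intro!: derivative_eq_intros simp: field_simps numeral_eq_Suc power2_eq_square)
  show "- (1/(2*b\<^sup>2)) * ((sqrt (2*b*L))^3 * G ?n (Suc ?n) (sqrt (2*b*L))) * b / sqrt (2*b*L) = L * core ?n b L"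
    if "L > 0" for L
  proof -
    have ss: "sqrt (2*b*L) * sqrt (2*b*L) = 2*b*L" using that b by simp
    have s: "(sqrt (2*b*L))^3 = (2*b*L) * sqrt (2*b*L)"
      by (simp only: power3_eq_cube ss)
    show ?thesis using that b unfolding s by (simp add: core_eq field_simps power2_eq_square)
  qed
  show "?P 0 = 0" by (simp add: G0)
  have "((\<lambda>t. - (1/(2*b\<^sup>2)) * (t^3 * G ?n ?n t - 3 * (t^2 * G ?n (m+2) t) + 6 * (t^1 * G ?n (m+1) t) - 6 * (t^0 * G ?n m t))) \<longlongrightarrow> - (1/(2*b\<^sup>2)) * (0 - 3 * 0 + 6 * 0 - 6 * 0)) at_top"
    by (intro tendsto_intros G_pow_decay)
  then show "(?P \<longlongrightarrow> 0) at_top" by (simp add: mult.assoc)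
qed



lemma pin0: "pin 0 t = t"
  by (simp add: pin_eq monom_0 pderiv_pCons)
lemma pin1: "pin 1 t = 3*t - t^3"
  by (simp add: pin_eq monom_0 monom_Suc pderiv_pCons numeral_eq_Suc algebra_simps)
lemma pin2: "pin 2 t = 12*t - 9*t^3 + t^5"
  by (simp add: pin_eq monom_0 monom_Suc pderiv_pCons numeral_eq_Suc algebra_simps)

lemma gint:
  assumes b: "b > 0"
  shows "((\<lambda>L. sqrt L * L ^ j * exp (- (b * L))) has_integral Gamma (real j + 3/2) / (b ^ (j+1) * sqrt b)) {0..}"
proof -
  have g: "((\<lambda>L. L powr (real j + 3/2 - 1) * exp (- (b * L))) has_integral Gamma (real j + 3/2) / b powr (real j + 3/2)) {0..}"
    by (rule gamma_scaled[OF b]) simp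
  have pw: "x powr (real j + 1/2) = sqrt x * x ^ j" if "x \<ge> 0" for x :: real
  proof (cases "x = 0")
    case True then show ?thesis by simp
  next
    case False
    then have "x > 0" using that by simp
    then show ?thesis by (simp add: powr_add powr_realpow powr_half_sqrt)
  qed
  have e: "real j + 3/2 = (real j + 1/2) + 1" by simp
  have "b powr (real j + 3/2) = b powr (real j + 1/2) * b powr 1"
    unfolding e by (rule powr_add)
  then have "b powr (real j + 3/2) = b ^ (j+1) * sqrt b"
    using pw[of b] b by simp
  moreover have "real j + 3/2 - 1 = real j + 1/2" by simp
  ultimately have g2: "((\<lambda>L. L powr (real j + 1/2) * exp (- (b * L))) has_integral Gamma (real j + 3/2) / (b ^ (j+1) * sqrt b)) {0..}"
    using g by (simp add: add.commute)
  show ?thesis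
    by (rule has_integral_eq[OF _ g2]) (simp add: pw)
qed

lemma Gamma32: "Gamma (3/2 :: real) = sqrt pi / 2"
proof -
  have "Gamma (1/2 + 1) = 1/2 * Gamma (1/2::real)" by (rule Gamma_plus1) (auto dest: nonpos_Ints_nonpos)
  then show ?thesis by (simp add: Gamma_one_half_real)
qed
lemma Gamma52: "Gamma (5/2 :: real) = 3 * sqrt pi / 4"
proof -
  have "Gamma (3/2 + 1) = 3/2 * Gamma (3/2::real)" by (rule Gamma_plus1) (auto dest: nonpos_Ints_nonpos)
  then show ?thesis by (simp add: Gamma32 mult.assoc)
qed
lemma Gamma72: "Gamma (7/2 :: real) = 15 * sqrt pi / 8"
proof -
  have "Gamma (5/2 + 1) = 5/2 * Gamma (5/2::real)" by (rule Gamma_plus1) (auto dest: nonpos_Ints_nonpos)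
  then show ?thesis by (simp add: Gamma52)
qed
lemma Gamma92: "Gamma (9/2 :: real) = 105 * sqrt pi / 16"
proof -
  have "Gamma (7/2 + 1) = 7/2 * Gamma (7/2::real)" by (rule Gamma_plus1) (auto dest: nonpos_Ints_nonpos)
  then show ?thesis by (simp add: Gamma72 mult.assoc)
qed

lemma gint0: "b > 0 \<Longrightarrow> ((\<lambda>L. sqrt L * exp (- (b * L))) has_integral sqrt pi / (2 * b * sqrt b)) {0..}"
  using gint[of b 0] by (simp add: Gamma32 mult.assoc)
lemma gint1: "b > 0 \<Longrightarrow> ((\<lambda>L. sqrt L * L * exp (- (b * L))) has_integral 3 * sqrt pi / (4 * b^2 * sqrt b)) {0..}"
  using gint[of b 1] by (simp add: Gamma52 power2_eq_square mult.assoc)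
lemma gint2: "b > 0 \<Longrightarrow> ((\<lambda>L. sqrt L * L^2 * exp (- (b * L))) has_integral 15 * sqrt pi / (8 * b^3 * sqrt b)) {0..}"
  using gint[of b 2] by (simp add: Gamma72 mult.assoc)
lemma gint3: "b > 0 \<Longrightarrow> ((\<lambda>L. sqrt L * L^3 * exp (- (b * L))) has_integral 105 * sqrt pi / (16 * b^4 * sqrt b)) {0..}"
  using gint[of b 3] by (simp add: Gamma92 mult.assoc)

lemma sq2b: "b > 0 \<Longrightarrow> L \<ge> 0 \<Longrightarrow> sqrt (2 * b * L) = sqrt 2 * sqrt b * sqrt L"
  by (simp add: real_sqrt_mult)

lemma core_int0:
  assumes b: "b > 0"
  shows "(core 0 b has_integral sqrt 2 * sqrt pi / (2 * b)) {0..}"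
proof -
  have h: "((\<lambda>L. (sqrt 2 * sqrt b) * (sqrt L * exp (- (b * L)))) has_integral (sqrt 2 * sqrt b) * (sqrt pi / (2 * b * sqrt b))) {0..}"
    by (rule has_integral_mult_right[OF gint0[OF b]])
  have "(core 0 b has_integral (sqrt 2 * sqrt b) * (sqrt pi / (2 * b * sqrt b))) {0..}"
    by (rule has_integral_eq[OF _ h]) (use b in \<open>simp add: core_def pin0 sq2b\<close>)
  then show ?thesis using b by (simp add: field_simps)
qed

lemma core_L0:
  assumes b: "b > 0"
  shows "((\<lambda>L. L * core 0 b L) has_integral 3 * sqrt 2 * sqrt pi / (4 * b^2)) {0..}"
proof -
  have h: "((\<lambda>L. (sqrt 2 * sqrt b) * (sqrt L * L * exp (- (b * L)))) has_integral (sqrt 2 * sqrt b) * (3 * sqrt pi / (4 * b^2 * sqrt b))) {0..}"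
    by (rule has_integral_mult_right[OF gint1[OF b]])
  have "((\<lambda>L. L * core 0 b L) has_integral (sqrt 2 * sqrt b) * (3 * sqrt pi / (4 * b^2 * sqrt b))) {0..}"
    by (rule has_integral_eq[OF _ h]) (use b in \<open>simp add: core_def pin0 sq2b\<close>)
  then show ?thesis using b by (simp add: field_simps)
qed

lemma alg_L2: fixes p q E r :: real assumes "r^2 = 2"
  shows "r*q*12*(p*p^2*E) - r*q*18*q^2*(p*(p^2)^2*E) + r*q*4*(q^2)^2*(p*(p^2)^3*E) = p^2 * (E * (12*(r*q*p) - 9*(r*q*p)^3 + (r*q*p)^5))"
proof -
  have r3: "r^3 = 2*r" using assms by (simp add: power3_eq_cube power2_eq_square)
  have r5: "r^5 = 4*r" using assms r3 by (metis (no_types, lifting) mult.commute mult.left_commute mult_2 numeral_Bit0 numeral_Bit1 numeral_One power_add power_one_right)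
  show ?thesis by (simp add: power_mult_distrib r3 r5) algebra
qed
lemma alg_L1: fixes p q E r :: real assumes "r^2 = 2"
  shows "r*q*3*(p*p^2*E) - r*q*2*q^2*(p*(p^2)^2*E) = p^2 * (E * (3*(r*q*p) - (r*q*p)^3))"
proof -
  have r3: "r^3 = 2*r" using assms by (simp add: power3_eq_cube power2_eq_square)
  show ?thesis by (simp add: power_mult_distrib r3) algebra
qed

lemma alg_L1': fixes p q E r L b :: real assumes "r^2 = 2" "L = p^2" "b = q^2"
  shows "r*q*3*(p*L*E) - r*q*2*b*(p*L^2*E) = L*(E*(3*(r*q*p) - (r*q*p)^3))"
  using alg_L1[OF assms(1), of q p E] assms(2,3) by simp

lemma alg_L2': fixes p q E r L b :: real assumes "r^2 = 2" "L = p^2" "b = q^2"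
  shows "r*q*12*(p*L*E) - r*q*18*b*(p*L^2*E) + r*q*4*b^2*(p*L^3*E) = L*(E*(12*(r*q*p) - 9*(r*q*p)^3 + (r*q*p)^5))"
  using alg_L2[OF assms(1), of q p E] assms(2,3) by simp

lemma core_L1:
  assumes b: "b > 0"
  shows "((\<lambda>L. L * core 1 b L) has_integral - 3 * sqrt 2 * sqrt pi / (2 * b^2)) {0..}"
proof -
  let ?c = "sqrt 2 * sqrt b"
  have h: "((\<lambda>L. ?c * 3 * (sqrt L * L * exp (- (b * L))) - ?c * 2 * b * (sqrt L * L^2 * exp (- (b * L))))
     has_integral ?c * 3 * (3 * sqrt pi / (4 * b^2 * sqrt b)) - ?c * 2 * b * (15 * sqrt pi / (8 * b^3 * sqrt b))) {0..}"
    by (intro has_integral_diff has_integral_mult_right gint1 gint2 b)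
  have "((\<lambda>L. L * core 1 b L) has_integral ?c * 3 * (3 * sqrt pi / (4 * b^2 * sqrt b)) - ?c * 2 * b * (15 * sqrt pi / (8 * b^3 * sqrt b))) {0..}"
  proof (rule has_integral_eq[OF _ h])
    fix L :: real assume L: "L \<in> {0..}"
    have t2: "sqrt L ^ 2 = L" using L by simp
    have st: "sqrt (2*b*L) = sqrt 2 * sqrt b * sqrt L" using sq2b b L by simp
    show "?c * 3 * (sqrt L * L * exp (- (b * L))) - ?c * 2 * b * (sqrt L * L^2 * exp (- (b * L))) = L * core 1 b L"
      unfolding core_def pin1 st by (rule alg_L1') (use b L in simp_all)
  qed
  then show ?thesis using b by (simp add: field_simps power2_eq_square power3_eq_cube)
qed

lemma core_L2:
  assumes b: "b > 0"
  shows "((\<lambda>L. L * core 2 b L) has_integral 3 * sqrt 2 * sqrt pi / (2 * b^2)) {0..}"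
proof -
  let ?c = "sqrt 2 * sqrt b"
  have h: "((\<lambda>L. ?c * 12 * (sqrt L * L * exp (- (b * L))) - ?c * 18 * b * (sqrt L * L^2 * exp (- (b * L)))
       + ?c * 4 * b^2 * (sqrt L * L^3 * exp (- (b * L))))
     has_integral ?c * 12 * (3 * sqrt pi / (4 * b^2 * sqrt b)) - ?c * 18 * b * (15 * sqrt pi / (8 * b^3 * sqrt b))
       + ?c * 4 * b^2 * (105 * sqrt pi / (16 * b^4 * sqrt b))) {0..}"
    by (intro has_integral_add has_integral_diff has_integral_mult_right gint1 gint2 gint3 b)
  have "((\<lambda>L. L * core 2 b L) has_integral ?c * 12 * (3 * sqrt pi / (4 * b^2 * sqrt b)) - ?c * 18 * b * (15 * sqrt pi / (8 * b^3 * sqrt b))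
       + ?c * 4 * b^2 * (105 * sqrt pi / (16 * b^4 * sqrt b))) {0..}"
  proof (rule has_integral_eq[OF _ h])
    fix L :: real assume L: "L \<in> {0..}"
    have t2: "sqrt L * sqrt L = L" using L by simp
    have st: "sqrt (2*b*L) = sqrt 2 * sqrt b * sqrt L" using sq2b b L by simp
    have s2: "sqrt 2 * sqrt 2 = (2::real)" by simp
    have sb: "sqrt b * sqrt b = b" using b by simp
    show "?c * 12 * (sqrt L * L * exp (- (b * L))) - ?c * 18 * b * (sqrt L * L^2 * exp (- (b * L)))
       + ?c * 4 * b^2 * (sqrt L * L^3 * exp (- (b * L))) = L * core 2 b L"
      unfolding core_def pin2 st by (rule alg_L2') (use b L in simp_all)
  qed
  then show ?thesis using b by (simp add: field_simps power2_eq_square power3_eq_cube numeral_eq_Suc)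
qed



definition wt :: "real \<Rightarrow> nat \<Rightarrow> real" where
  "wt a n = (-1) ^ n * a powr (real n / 2) / (fact (Suc n) * Gamma ((real n + 1) / 2))"

lemma a_powr: "a > 0 \<Longrightarrow> a powr (real n / 2) = sqrt a ^ n"
proof -
  assume a: "a > 0"
  have "a powr (real n / 2) = (a powr (1/2)) powr real n" by (simp add: powr_powr)
  also have "\<dots> = sqrt a ^ n" using a by (simp add: powr_half_sqrt powr_realpow)
  finally show ?thesis .
qed

lemma wt_abs: "a > 0 \<Longrightarrow> \<bar>wt a n\<bar> = sqrt a ^ n / (fact (Suc n) * Gamma ((real n + 1) / 2))"
proof -
  assume a: "a > 0"
  have g: "Gamma ((real n + 1) / 2) > 0" by simp
  show ?thesis unfolding wt_def using a g by (simp add: a_powr abs_mult power_abs)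
qed

lemma wt_nz: "a > 0 \<Longrightarrow> wt a n \<noteq> 0"
proof -
  assume a: "a > 0"
  have g: "Gamma ((real n + 1) / 2) > 0" by simp
  have "sqrt a ^ n / (fact (Suc n) * Gamma ((real n + 1) / 2)) > 0"
    using g a by (intro divide_pos_pos mult_pos_pos) auto
  then have "\<bar>wt a n\<bar> > 0" by (simp only: wt_abs[OF a])
  then show ?thesis by simp
qed

lemma u_bound:
  assumes b: "b > 0" and a: "a > 0" and K: "K > 0" and L: "L \<ge> 0"
    and r: "r = 12 * sqrt a + 1" and t: "t = sqrt (2*b*L)" and y: "y = sqrt a * (t + r) / r"
  shows "\<bar>K * wt a n * core n b L\<bar> \<le> (2 * K / r * exp ((t+r)\<^sup>2/2 - t\<^sup>2) * (1 + y) * exp (8 * y\<^sup>2)) * (3/4) ^ n"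
proof -
  define s where "s = sqrt a"
  define F where "F = (fact (Suc n) :: real)"
  define Gm where "Gm = Gamma ((real n + 1) / 2)"
  have s0: "s \<ge> 0" using a by (simp add: s_def)
  have rp: "r > 0" using r s0 unfolding s_def by linarith
  have bl: "0 \<le> 2*b*L" using b L by simp
  have t0: "t \<ge> 0" unfolding t using bl by simp
  have tt: "t\<^sup>2 = 2*b*L" unfolding t using bl by (rule real_sqrt_pow2)
  have y0: "y \<ge> 0" using y s0 rp t0 s_def by simp
  have Fp: "F > 0" by (simp add: F_def)
  have Gp: "Gm > 0" by (simp add: Gm_def)
  have E: "exp (- (b * L)) = exp (- (t\<^sup>2/2))" using tt by simp
  have tb0: "poly (Bp n (Suc n)) t * exp (t\<^sup>2 / 2) * r ^ Suc n / F \<le> (t + r) ^ n * exp ((t + r)\<^sup>2 / 2)"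
    using taylor_bound[OF t0 rp, of n "Suc n"] by (simp add: F_def)
  have tb: "poly (Bp n (Suc n)) t \<le> F * (t + r) ^ n * exp ((t + r)\<^sup>2 / 2) / (exp (t\<^sup>2 / 2) * r ^ Suc n)"
    using tb0 Fp rp by (simp add: field_simps)
  have cb: "\<bar>core n b L\<bar> \<le> exp (- (t\<^sup>2/2)) * (F * (t + r) ^ n * exp ((t + r)\<^sup>2 / 2) / (exp (t\<^sup>2 / 2) * r ^ Suc n))"
  proof -
    have "\<bar>core n b L\<bar> = exp (- (t\<^sup>2/2)) * \<bar>poly (Pp n (Suc n)) t\<bar>"
      unfolding core_def pin_eq E t[symmetric] by (simp add: abs_mult)
    also have "\<dots> \<le> exp (- (t\<^sup>2/2)) * poly (Bp n (Suc n)) t"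
      using poly_bound[of n "Suc n" t] t0 by (intro mult_left_mono) auto
    also have "\<dots> \<le> exp (- (t\<^sup>2/2)) * (F * (t + r) ^ n * exp ((t + r)\<^sup>2 / 2) / (exp (t\<^sup>2 / 2) * r ^ Suc n))"
      by (intro mult_left_mono tb) auto
    finally show ?thesis .
  qed
  have "\<bar>K * wt a n * core n b L\<bar> = K * (s ^ n / (F * Gm)) * \<bar>core n b L\<bar>"
    using K a by (simp add: abs_mult wt_abs s_def F_def Gm_def)
  also have "\<dots> \<le> K * (s ^ n / (F * Gm)) * (exp (- (t\<^sup>2/2)) * (F * (t + r) ^ n * exp ((t + r)\<^sup>2 / 2) / (exp (t\<^sup>2 / 2) * r ^ Suc n)))"
    using K s0 Fp Gp by (intro mult_left_mono cb) auto
  also have "\<dots> = K / r * exp ((t+r)\<^sup>2/2 - t\<^sup>2) * (y ^ n / Gm)"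
  proof -
    have ex: "exp ((t+r)\<^sup>2/2 - t\<^sup>2) = exp ((t + r)\<^sup>2 / 2) * exp (- (t\<^sup>2/2)) / exp (t\<^sup>2 / 2)"
      by (simp add: exp_diff[symmetric] exp_add[symmetric])
    have yn: "y ^ n = s ^ n * (t + r) ^ n / r ^ n"
      unfolding y s_def[symmetric] by (simp add: power_divide power_mult_distrib)
    show ?thesis unfolding ex yn using Fp Gp rp by (simp add: field_simps)
  qed
  also have "\<dots> \<le> K / r * exp ((t+r)\<^sup>2/2 - t\<^sup>2) * ((1 + y) * exp (8 * y\<^sup>2) * (2 * (3/4) ^ n))"
    unfolding Gm_def using K rp by (intro mult_left_mono gamma_series_bound y0) auto
  also have "\<dots> = (2 * K / r * exp ((t+r)\<^sup>2/2 - t\<^sup>2) * (1 + y) * exp (8 * y\<^sup>2)) * (3/4) ^ n"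
    by (simp add: field_simps)
  finally show ?thesis .
qed

lemma Dm_bound:
  assumes b: "b > 0" and a: "a > 0" and K: "K > 0" and L: "L \<ge> 0"
    and r: "r = 12 * sqrt a + 1" and t: "t = sqrt (2*b*L)" and y: "y = sqrt a * (t + r) / r"
  shows "2 * K / r * exp ((t+r)\<^sup>2/2 - t\<^sup>2) * (1 + y) * exp (8 * y\<^sup>2)
     \<le> (2 * K / r * exp (5/2 * r\<^sup>2 + 16 * a + sqrt a + 1)) * exp (- (b/4) * L)"
proof -
  define s where "s = sqrt a"
  define q where "q = s / r"
  have s0: "s \<ge> 0" using a by (simp add: s_def)
  have ss: "s\<^sup>2 = a" using a by (simp add: s_def)
  have rp: "r > 0" using r s0 unfolding s_def by linarith
  have bl: "0 \<le> 2*b*L" using b L by simp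
  have t0: "t \<ge> 0" unfolding t using bl by simp
  have tt: "t\<^sup>2 = 2*b*L" unfolding t using bl by (rule real_sqrt_pow2)
  have q0: "q \<ge> 0" using s0 rp by (simp add: q_def)
  have q1: "q \<le> 1/12"
  proof -
    have "12 * s \<le> r" using r unfolding s_def by simp
    then show ?thesis using rp unfolding q_def by (simp add: field_simps)
  qed
  have yq: "y = q * t + s" using rp unfolding y q_def s_def by (simp add: field_simps)
  have y0: "y \<ge> 0" using yq q0 t0 s0 by simp
  have i1: "t * r \<le> t\<^sup>2/8 + 2 * r\<^sup>2"
  proof -
    have "0 \<le> (t - 4*r)\<^sup>2" by simp
    then show ?thesis by (simp add: power2_eq_square algebra_simps)
  qed
  have i2: "8 * y\<^sup>2 \<le> t\<^sup>2/8 + 16 * a"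
  proof -
    have "0 \<le> (q*t - s)\<^sup>2" by simp
    then have "y\<^sup>2 \<le> 2 * (q\<^sup>2 * t\<^sup>2) + 2 * s\<^sup>2" unfolding yq by (simp add: power2_eq_square algebra_simps)
    moreover have "q\<^sup>2 \<le> 1/144"
    proof -
      have "q\<^sup>2 \<le> (1/12)\<^sup>2" using q0 q1 by (intro power_mono) auto
      then show ?thesis by (simp add: power2_eq_square)
    qed
    then have "q\<^sup>2 * t\<^sup>2 \<le> 1/144 * t\<^sup>2" by (intro mult_right_mono) auto
    moreover have "t\<^sup>2 \<ge> 0" by simp
    ultimately show ?thesis using ss by linarith
  qed
  have i3: "y \<le> t\<^sup>2/8 + s + 1"
  proof -
    have "q * t \<le> 1/12 * t" using q1 t0 by (intro mult_right_mono) auto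
    moreover have "0 \<le> (t - 1/3)\<^sup>2" by simp
    then have "1/12 * t \<le> t\<^sup>2/8 + 1" by (simp add: power2_eq_square algebra_simps)
    ultimately show ?thesis using yq by linarith
  qed
  have ex: "(t+r)\<^sup>2/2 - t\<^sup>2 + y + 8 * y\<^sup>2 \<le> (5/2 * r\<^sup>2 + 16 * a + sqrt a + 1) + (- (b/4) * L)"
  proof -
    have e: "(t+r)\<^sup>2/2 - t\<^sup>2 = - t\<^sup>2/2 + t * r + r\<^sup>2/2" by (simp add: power2_eq_square algebra_simps)
    have e2: "- (b/4) * L = - (t\<^sup>2 / 8)" using tt by simp
    show ?thesis unfolding e e2 using i1 i2 i3 unfolding s_def by linarith
  qed
  have "2 * K / r * exp ((t+r)\<^sup>2/2 - t\<^sup>2) * (1 + y) * exp (8 * y\<^sup>2)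
      \<le> 2 * K / r * exp ((t+r)\<^sup>2/2 - t\<^sup>2) * exp y * exp (8 * y\<^sup>2)"
    using K rp y0 by (intro mult_right_mono mult_left_mono exp_ge_add_one_self) auto
  also have "\<dots> = 2 * K / r * exp ((t+r)\<^sup>2/2 - t\<^sup>2 + y + 8 * y\<^sup>2)"
    by (simp add: exp_add)
  also have "\<dots> \<le> 2 * K / r * exp ((5/2 * r\<^sup>2 + 16 * a + sqrt a + 1) + (- (b/4) * L))"
    using K rp ex by (intro mult_left_mono) auto
  also have "\<dots> = (2 * K / r * exp (5/2 * r\<^sup>2 + 16 * a + sqrt a + 1)) * exp (- (b/4) * L)"
    by (simp only: exp_add mult.assoc)
  finally show ?thesis .
qed



lemma fin_supp_lim:
  fixes g :: "nat \<Rightarrow> real"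
  assumes "\<And>n. n \<ge> N \<Longrightarrow> g n = 0"
  shows "(\<lambda>k. \<Sum>n<k. g n) \<longlonglongrightarrow> (\<Sum>n<N. g n)"
proof (rule tendsto_eventually)
  show "\<forall>\<^sub>F k in sequentially. (\<Sum>n<k. g n) = (\<Sum>n<N. g n)"
    using eventually_ge_at_top[of N]
  proof eventually_elim
    fix k assume k: "N \<le> k"
    show "(\<Sum>n<k. g n) = (\<Sum>n<N. g n)"
      by (rule sum.mono_neutral_right) (use k assms in auto)
  qed
qed

lemma geom_sum_le: "(\<Sum>n<k. (3/4::real) ^ n) \<le> 4"
proof -
  have s: "summable (\<lambda>n. (3/4::real) ^ n)" by (rule summable_geometric) simp
  have "(\<Sum>n<k. (3/4::real) ^ n) \<le> (\<Sum>n. (3/4::real) ^ n)"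
    by (rule sum_le_suminf[OF s]) auto
  also have "\<dots> = 4" by (subst suminf_geometric) auto
  finally show ?thesis .
qed

lemma exp_int: "(b::real) > 0 \<Longrightarrow> (\<lambda>L. exp (- (b/4) * L)) integrable_on {0..}"
  using integrable_on_exp_minus_to_infinity[of "b/4" 0] by simp

lemma Lexp_int: "(b::real) > 0 \<Longrightarrow> (\<lambda>L. L * exp (- (b/4) * L)) integrable_on {0..}"
proof -
  assume b: "b > 0"
  have "((\<lambda>L. L powr (2 - 1) * exp (- (b/4 * L))) has_integral Gamma 2 / (b/4) powr 2) {0..}"
    by (rule gamma_scaled) (use b in auto)
  then have "((\<lambda>L. L * exp (- (b/4) * L)) has_integral Gamma 2 / (b/4) powr 2) {0..}"
    by (rule has_integral_eq[rotated]) (simp add: powr_one)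
  then show ?thesis by blast
qed

lemma s3: "(\<Sum>n<3::nat. g n) = g 0 + g 1 + (g 2 :: real)"
  by (simp add: numeral_3_eq_3 numeral_2_eq_2)

lemma main_gen:
  fixes a b K :: real
  assumes b: "b > 0" and a: "a > 0" and K: "K > 0"
  defines "u \<equiv> \<lambda>n L. K * wt a n * core n b L"
  shows "((\<lambda>L. \<Sum>n. u n L) has_integral K * wt a 0 * (sqrt 2 * sqrt pi / (2 * b))) {0..}"
    and "((\<lambda>L. L * (\<Sum>n. u n L)) has_integral
          K * wt a 0 * (3 * sqrt 2 * sqrt pi / (4 * b^2)) + K * wt a 1 * (- 3 * sqrt 2 * sqrt pi / (2 * b^2))
          + K * wt a 2 * (3 * sqrt 2 * sqrt pi / (2 * b^2))) {0..}"
    and "\<And>L. L \<ge> 0 \<Longrightarrow> summable (\<lambda>n. u n L)"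
proof -
  define r where "r = 12 * sqrt a + 1"
  define C where "C = 2 * K / r * exp (5/2 * r\<^sup>2 + 16 * a + sqrt a + 1)"
  define E where "E L = exp (- (b/4) * L)" for L :: real
  have rp: "r > 0" using a unfolding r_def by (simp add: add_nonneg_pos)
  have Cp: "C > 0" using K rp by (simp add: C_def)
  have E0: "E L > 0" for L by (simp add: E_def)
  have bnd: "\<bar>u n L\<bar> \<le> C * E L * (3/4) ^ n" if L: "L \<ge> 0" for n L
  proof -
    define t where "t = sqrt (2*b*L)"
    define y where "y = sqrt a * (t + r) / r"
    have "\<bar>u n L\<bar> \<le> (2 * K / r * exp ((t+r)\<^sup>2/2 - t\<^sup>2) * (1 + y) * exp (8 * y\<^sup>2)) * (3/4) ^ n"
      unfolding u_def by (rule u_bound[OF b a K L r_def t_def y_def])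
    also have "\<dots> \<le> C * E L * (3/4) ^ n"
      unfolding C_def E_def by (intro mult_right_mono Dm_bound[OF b a K L r_def t_def y_def]) auto
    finally show ?thesis .
  qed
  have summ: "summable (\<lambda>n. u n L)" if L: "L \<ge> 0" for L
  proof (rule summable_comparison_test')
    show "summable (\<lambda>n. C * E L * (3/4::real) ^ n)"
      by (intro summable_mult summable_geometric) auto
    show "norm (u n L) \<le> C * E L * (3/4) ^ n" for n using bnd[OF L] by simp
  qed
  show "\<And>L. L \<ge> 0 \<Longrightarrow> summable (\<lambda>n. u n L)" by (rule summ)
  have psum: "\<bar>\<Sum>n<k. u n L\<bar> \<le> 4 * C * E L" if L: "L \<ge> 0" for k L
  proof -
    have "\<bar>\<Sum>n<k. u n L\<bar> \<le> (\<Sum>n<k. \<bar>u n L\<bar>)" by (rule sum_abs)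
    also have "\<dots> \<le> (\<Sum>n<k. C * E L * (3/4) ^ n)" by (intro sum_mono bnd L)
    also have "\<dots> = C * E L * (\<Sum>n<k. (3/4) ^ n)" by (simp add: sum_distrib_left)
    also have "\<dots> \<le> C * E L * 4" using Cp E0[of L] by (intro mult_left_mono geom_sum_le) auto
    finally show ?thesis by simp
  qed
  have Eint: "E integrable_on {0..}" unfolding E_def using exp_int[OF b] .
  have LEint: "(\<lambda>L. L * E L) integrable_on {0..}" unfolding E_def using Lexp_int[OF b] .
  have core_bnd: "\<bar>core n b L\<bar> \<le> (C * (3/4) ^ n / (K * \<bar>wt a n\<bar>)) * E L" if L: "L \<ge> 0" for n L
  proof -
    have w: "\<bar>wt a n\<bar> > 0" using wt_nz[OF a] by simp
    have "K * \<bar>wt a n\<bar> * \<bar>core n b L\<bar> \<le> C * E L * (3/4) ^ n"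
      using bnd[OF L, of n] K unfolding u_def by (simp add: abs_mult)
    then show ?thesis using w K by (simp add: field_simps)
  qed
  define J0 where "J0 n = (if n = 0 then sqrt 2 * sqrt pi / (2 * b) else 0)" for n :: nat
  have J0: "(core n b has_integral J0 n) {0..}" for n
  proof (cases n)
    case 0 then show ?thesis using core_int0[OF b] by (simp add: J0_def)
  next
    case (Suc m)
    have "(core (Suc m) b has_integral 0) {0..}"
      by (rule core_zero[OF b _ core_bnd]) (intro integrable_on_mult_right Eint)
    then show ?thesis using Suc by (simp add: J0_def)
  qed
  define J1 where "J1 n = (if n = 0 then 3 * sqrt 2 * sqrt pi / (4 * b^2)
     else if n = 1 then - 3 * sqrt 2 * sqrt pi / (2 * b^2)
     else if n = 2 then 3 * sqrt 2 * sqrt pi / (2 * b^2) else 0)" for n :: nat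
  have J1: "((\<lambda>L. L * core n b L) has_integral J1 n) {0..}" for n
  proof -
    have "n = 0 \<or> n = 1 \<or> n = 2 \<or> (\<exists>m. n = m + 3)" by presburger
    then consider "n = 0" | "n = 1" | "n = 2" | m where "n = m + 3" by blast
    then show ?thesis
    proof cases
      case 1 then show ?thesis using core_L0[OF b] by (simp add: J1_def)
    next
      case 2 then show ?thesis using core_L1[OF b] by (simp add: J1_def)
    next
      case 3 then show ?thesis using core_L2[OF b] by (simp add: J1_def)
    next
      case (4 m)
      have "((\<lambda>L. L * core (m+3) b L) has_integral 0) {0..}"
      proof (rule core_zero1[OF b])
        show "(\<lambda>L. (C * (3/4) ^ (m+3) / (K * \<bar>wt a (m+3)\<bar>)) * (L * E L)) integrable_on {0..}"
          by (intro integrable_on_mult_right LEint)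
        show "\<bar>L * core (m + 3) b L\<bar> \<le> (C * (3/4) ^ (m+3) / (K * \<bar>wt a (m+3)\<bar>)) * (L * E L)" if L: "L \<ge> 0" for L
          using mult_left_mono[OF core_bnd[OF L, of "m+3"] L] L by (simp add: abs_mult algebra_simps)
      qed
      then show ?thesis using 4 by (simp add: J1_def)
    qed
  qed
  show "((\<lambda>L. \<Sum>n. u n L) has_integral K * wt a 0 * (sqrt 2 * sqrt pi / (2 * b))) {0..}"
  proof (rule has_integral_dominated_convergence[where f = "\<lambda>k L. \<Sum>n<k. u n L" and y = "\<lambda>k. \<Sum>n<k. K * wt a n * J0 n" and h = "\<lambda>L. 4 * C * E L"])
    show "((\<lambda>L. \<Sum>n<k. u n L) has_integral (\<Sum>n<k. K * wt a n * J0 n)) {0..}" for k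
      unfolding u_def by (intro has_integral_sum has_integral_mult_right J0) auto
    show "(\<lambda>L. 4 * C * E L) integrable_on {0..}"
      using integrable_on_mult_right[OF Eint, of "4 * C"] by (simp add: mult.assoc)
    show "\<forall>x\<in>{0..}. norm (\<Sum>n<k. u n x) \<le> 4 * C * E x" for k using psum by auto
    show "\<forall>x\<in>{0..}. (\<lambda>k. \<Sum>n<k. u n x) \<longlonglongrightarrow> (\<Sum>n. u n x)"
      using summ summable_LIMSEQ by auto
    have "(\<lambda>k. \<Sum>n<k. K * wt a n * J0 n) \<longlonglongrightarrow> (\<Sum>n<1. K * wt a n * J0 n)"
      by (rule fin_supp_lim) (simp add: J0_def)
    then show "(\<lambda>k. \<Sum>n<k. K * wt a n * J0 n) \<longlonglongrightarrow> K * wt a 0 * (sqrt 2 * sqrt pi / (2 * b))"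
      by (simp add: J0_def)
  qed
  show "((\<lambda>L. L * (\<Sum>n. u n L)) has_integral
          K * wt a 0 * (3 * sqrt 2 * sqrt pi / (4 * b^2)) + K * wt a 1 * (- 3 * sqrt 2 * sqrt pi / (2 * b^2))
          + K * wt a 2 * (3 * sqrt 2 * sqrt pi / (2 * b^2))) {0..}"
  proof (rule has_integral_dominated_convergence[where f = "\<lambda>k L. \<Sum>n<k. L * u n L" and y = "\<lambda>k. \<Sum>n<k. K * wt a n * J1 n" and h = "\<lambda>L. 4 * C * (L * E L)"])
    show "((\<lambda>L. \<Sum>n<k. L * u n L) has_integral (\<Sum>n<k. K * wt a n * J1 n)) {0..}" for k
    proof (intro has_integral_sum)
      fix n
      have "((\<lambda>L. (K * wt a n) * (L * core n b L)) has_integral (K * wt a n) * J1 n) {0..}"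
        by (intro has_integral_mult_right J1)
      then show "((\<lambda>L. L * u n L) has_integral K * wt a n * J1 n) {0..}"
        unfolding u_def by (simp add: algebra_simps)
    qed auto
    show "(\<lambda>L. 4 * C * (L * E L)) integrable_on {0..}"
      by (intro integrable_on_mult_right LEint)
    show "\<forall>x\<in>{0..}. norm (\<Sum>n<k. x * u n x) \<le> 4 * C * (x * E x)" for k
    proof
      fix x :: real assume x: "x \<in> {0..}"
      have "\<bar>\<Sum>n<k. x * u n x\<bar> = x * \<bar>\<Sum>n<k. u n x\<bar>" using x by (simp add: sum_distrib_left[symmetric] abs_mult)
      also have "\<dots> \<le> x * (4 * C * E x)" using x psum by (intro mult_left_mono) auto
      finally show "norm (\<Sum>n<k. x * u n x) \<le> 4 * C * (x * E x)" by (simp add: algebra_simps)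
    qed
    show "\<forall>x\<in>{0..}. (\<lambda>k. \<Sum>n<k. x * u n x) \<longlonglongrightarrow> x * (\<Sum>n. u n x)"
      using summ summable_LIMSEQ by (auto simp: sum_distrib_left[symmetric] intro!: tendsto_mult_left)
    have "(\<lambda>k. \<Sum>n<k. K * wt a n * J1 n) \<longlonglongrightarrow> (\<Sum>n<3. K * wt a n * J1 n)"
      by (rule fin_supp_lim) (simp add: J1_def)
    then show "(\<lambda>k. \<Sum>n<k. K * wt a n * J1 n) \<longlonglongrightarrow> K * wt a 0 * (3 * sqrt 2 * sqrt pi / (4 * b^2)) + K * wt a 1 * (- 3 * sqrt 2 * sqrt pi / (2 * b^2))
          + K * wt a 2 * (3 * sqrt 2 * sqrt pi / (2 * b^2))"
      by (simp add: J1_def s3)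
  qed
qed



lemma final_alg:
  fixes P Q R W v K S c L1 :: real
  assumes "P > 0" "Q > 0" "W > 0" "v > 0" "c = Q^2" "L1 = R^2"
  shows "(3 * c * W\<^sup>2 + 3 * (P * Q * R) * W + 2 * L1) / (2 * v\<^sup>2) * (K * (1 / P) * (S * P / (2 * (v\<^sup>2 / (c * W\<^sup>2)))))
    = K * (1 / P) * (3 * S * P / (4 * (v\<^sup>2 / (c * W\<^sup>2))^2))
      + K * (- (R / (Q * W)) / 2) * (- 3 * S * P / (2 * (v\<^sup>2 / (c * W\<^sup>2))^2))
      + K * (L1 / (c * W\<^sup>2) / (3 * P)) * (3 * S * P / (2 * (v\<^sup>2 / (c * W\<^sup>2))^2))"
  using assms by (simp add: field_simps power2_eq_square)

theorem mainTheorem12: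
  fixes c v L1 :: real
  assumes "c = 1/3 \<or> c = 1/2"
    and "v > 1"
    and "L1 > 0"
  shows "\<exists>m > 0. ((\<lambda>L2. jointDensity c v L1 L2) has_integral m) {0..}
            \<and> ((\<lambda>L2. L2 * jointDensity c v L1 L2) has_integral (Lav c v L1 * m)) {0..}"
proof -
  have c: "c > 0" using assms(1) by auto
  have v: "v > 1" by (rule assms(2))
  have L1: "L1 > 0" by (rule assms(3))
  define b where "b = v\<^sup>2 / (c * (v - 1)\<^sup>2)"
  define a where "a = L1 / (c * (v - 1)\<^sup>2)"
  define K where "K = (2 / sqrt pi) * sqrt L1 / c powr (3/2) * exp (- L1 / c) * (sqrt 2 / c) * (v\<^sup>2 / (v - 1)\<^sup>2)"
  define u where "u = (\<lambda>n L. K * wt a n * core n b L)"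
  have b0: "b > 0" using c v by (simp add: b_def)
  have a0: "a > 0" using c v L1 by (simp add: a_def)
  have K0: "K > 0" using c v L1 by (simp add: K_def)
  note mg = main_gen[OF b0 a0 K0, folded u_def]
  define e where "e n L = (-1) ^ n * a powr (real n / 2) * pin n (sqrt (2 * b * L)) / (fact (Suc n) * Gamma ((real n + 1) / 2))" for n L
  have ue: "u n L = (K * exp (- (b * L))) * e n L" for n L
    unfolding u_def e_def wt_def core_def by (simp add: field_simps)
  have jd: "jointDensity c v L1 L = K * exp (- (b * L)) * (\<Sum>n. e n L)" for L
  proof -
    have r1: "- (L * v\<^sup>2) / (c * (v - 1)\<^sup>2) = - (b * L)" by (simp add: b_def)
    have r2: "2 * L * v\<^sup>2 / (c * (v - 1)\<^sup>2) = 2 * b * L" by (simp add: b_def)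
    have r3: "L1 / (c * (v - 1)\<^sup>2) = a" by (simp add: a_def)
    show ?thesis unfolding jointDensity_def r1 r2 r3 e_def[symmetric] K_def by (simp add: field_simps)
  qed
  have jsum: "jointDensity c v L1 L = (\<Sum>n. u n L)" if L: "L \<ge> 0" for L
  proof -
    have ne: "K * exp (- (b * L)) \<noteq> 0" using K0 by simp
    have su: "summable (\<lambda>n. u n L)" using mg(3)[OF L] unfolding u_def by simp
    have "summable (\<lambda>n. (K * exp (- (b * L))) * e n L)" using su unfolding ue .
    then have se: "summable (\<lambda>n. e n L)" using ne summable_cmult_iff by blast
    show ?thesis unfolding jd ue by (simp add: suminf_mult[OF se])
  qed
  define m where "m = K * wt a 0 * (sqrt 2 * sqrt pi / (2 * b))"
  have w0: "wt a 0 = 1 / sqrt pi" using a0 by (simp add: wt_def Gamma_one_half_real)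
  have w1: "wt a 1 = - sqrt a / 2"
  proof -
    have "Gamma (1::real) = 1" using Gamma_fact[of 0] by simp
    then show ?thesis using a0 by (simp add: wt_def powr_half_sqrt)
  qed
  have w2: "wt a 2 = a / (3 * sqrt pi)"
  proof -
    have g: "Gamma ((real 2 + 1) / 2) = sqrt pi / 2" using Gamma32 by simp
    have f3: "fact 3 = (6::real)" by (simp add: fact_numeral)
    show ?thesis using a0 unfolding wt_def g by (simp add: f3)
  qed
  have m0: "m > 0" using K0 b0 by (simp add: m_def w0)
  have sa: "sqrt a = sqrt L1 / (sqrt c * (v - 1))"
    using c v unfolding a_def by (simp add: real_sqrt_divide real_sqrt_mult)
  have lav: "Lav c v L1 * m = K * wt a 0 * (3 * sqrt 2 * sqrt pi / (4 * b^2)) + K * wt a 1 * (- 3 * sqrt 2 * sqrt pi / (2 * b^2))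
          + K * wt a 2 * (3 * sqrt 2 * sqrt pi / (2 * b^2))"
  proof -
    have sc: "sqrt c * sqrt c = c" using c by simp
    have sp: "sqrt pi * sqrt pi = pi" by simp
    have sq: "sqrt (pi * c * L1) = sqrt pi * sqrt c * sqrt L1" by (simp add: real_sqrt_mult)
    show ?thesis unfolding Lav_def m_def w0 w1 w2 sa sq unfolding a_def b_def
      by (rule final_alg) (use c v L1 in simp_all)
  qed
  have i1: "((\<lambda>L2. jointDensity c v L1 L2) has_integral m) {0..}"
    by (rule has_integral_eq[OF _ mg(1)[folded m_def]]) (simp add: jsum u_def)
  have i2: "((\<lambda>L2. L2 * jointDensity c v L1 L2) has_integral (Lav c v L1 * m)) {0..}"
    unfolding lav by (rule has_integral_eq[OF _ mg(2)]) (simp add: jsum u_def)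
  show ?thesis using m0 i1 i2 by blast
qed


end
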